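(* Let $w\in\mathfrak{S}_n$ and let $\varphi$ be a graph automorphism of $\Gamma(e,w)$ with $\varphi(w)=e$. (1) If $i<j<k$ and $w(i)>w(j)>w(k)$, then there exist $a<b<c$ with $w\ge t_{ac}$ such that $\varphi(\{wt_{ij},wt_{ik},wt_{jk}\})=\{t_{ab},t_{ac},t_{bc}\}$. (2) If $a<b<c$ and $w\ge t_{ac}$, then there exist $i<j<k$ with $w(i)>w(j)>w(k)$ such that $\varphi^{-1}(\{t_{ab},t_{ac},t_{bc}\})=\{wt_{ij},wt_{ik},wt_{jk}\}$.
   Context: $\mathfrak{S}_n$ is the symmetric group with simple generators $s_i=(i\ i{+}1)$; products are compositions $(uv)(m)=u(v(m))$. $t_{ij}$ denotes the transposition $(i\ j)$ for $i<j$; these are the reflections. $\le$ is Bruhat order and $e$ the identity. $\Gamma(e,w)$ is the simple undirected graph with vertex set $[e,w]=\{x:x\le w\}$ and edges $\{x,y\}$ whenever $y=xt$ for a transposition $t$. *)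

theory Defs
  imports "HOL-Combinatorics.Combinatorics"
begin

text \<open>Permutations of [n] = {1..n}, as functions nat => nat fixing everything outside {1..n}.
  Product uv is composition u o v. The transposition t_ij is transpose i j.\<close>

definition perms :: "nat \<Rightarrow> (nat \<Rightarrow> nat) set" where
  "perms n = {p. p permutes {1..n}}"

definition refl_trans :: "nat \<Rightarrow> nat \<Rightarrow> nat \<Rightarrow> bool" where
  "refl_trans n i j \<longleftrightarrow> 1 \<le> i \<and> i < j \<and> j \<le> n"

definition inv_num :: "nat \<Rightarrow> (nat \<Rightarrow> nat) \<Rightarrow> nat" where
  "inv_num n x = card {(i, j). 1 \<le> i \<and> i < j \<and> j \<le> n \<and> x i > x j}"

definition bruhat_step :: "nat \<Rightarrow> (nat \<Rightarrow> nat) \<Rightarrow> (nat \<Rightarrow> nat) \<Rightarrow> bool" where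
  "bruhat_step n x y \<longleftrightarrow> x \<in> perms n \<and>
     (\<exists>i j. refl_trans n i j \<and> y = x \<circ> transpose i j) \<and> inv_num n x < inv_num n y"

definition bruhat_le :: "nat \<Rightarrow> (nat \<Rightarrow> nat) \<Rightarrow> (nat \<Rightarrow> nat) \<Rightarrow> bool" where
  "bruhat_le n x y \<longleftrightarrow> x \<in> perms n \<and> y \<in> perms n \<and> (bruhat_step n)\<^sup>*\<^sup>* x y"

definition bruhat_interval :: "nat \<Rightarrow> (nat \<Rightarrow> nat) \<Rightarrow> (nat \<Rightarrow> nat) set" where
  "bruhat_interval n w = {x. bruhat_le n x w}"

definition gamma_adj :: "nat \<Rightarrow> (nat \<Rightarrow> nat) \<Rightarrow> (nat \<Rightarrow> nat) \<Rightarrow> bool" where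
  "gamma_adj n x y \<longleftrightarrow> (\<exists>i j. refl_trans n i j \<and> y = x \<circ> transpose i j)"

definition gamma_aut :: "nat \<Rightarrow> (nat \<Rightarrow> nat) \<Rightarrow> ((nat \<Rightarrow> nat) \<Rightarrow> (nat \<Rightarrow> nat)) \<Rightarrow> bool" where
  "gamma_aut n w \<phi> \<longleftrightarrow> bij_betw \<phi> (bruhat_interval n w) (bruhat_interval n w) \<and>
     (\<forall>x\<in>bruhat_interval n w. \<forall>y\<in>bruhat_interval n w.
        gamma_adj n x y \<longleftrightarrow> gamma_adj n (\<phi> x) (\<phi> y))"

end

theory Submission
  imports Defs
begin

lemma inv_swap:
  fixes x :: "nat \<Rightarrow> nat"
  assumes xij: "x i > x j" and i: "1 \<le> i" "i < j" "j \<le> n"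
  shows "inv_num n (x \<circ> transpose i j) < inv_num n x"
proof -
  let ?t = "transpose i j"
  define Sy where "Sy = {(a, b). 1 \<le> a \<and> a < b \<and> b \<le> n \<and> (x \<circ> ?t) a > (x \<circ> ?t) b}"
  define Sx where "Sx = {(a, b). 1 \<le> a \<and> a < b \<and> b \<le> n \<and> x a > x b}"
  define f where "f = (\<lambda>(a::nat, b::nat). if ?t a < ?t b then (?t a, ?t b) else (a, b))"
  have finx: "finite Sx"
    by (rule finite_subset[of _ "{1..n} \<times> {1..n}"]) (auto simp: Sx_def)
  have ij: "(i, j) \<in> Sx" using assms by (auto simp: Sx_def)
  have img: "f ` Sy \<subseteq> Sx - {(i, j)}"
  proof
    fix z assume "z \<in> f ` Sy"
    then obtain a b where ab: "(a, b) \<in> Sy" and z: "z = f (a, b)" by auto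
    from ab have a: "1 \<le> a" "a < b" "b \<le> n" "x (?t a) > x (?t b)" by (auto simp: Sy_def)
    show "z \<in> Sx - {(i, j)}"
      using a xij i unfolding z f_def Sx_def
      by (auto simp: transpose_def split: if_splits)
  qed
  have inj: "inj_on f Sy"
    unfolding inj_on_def f_def Sy_def
    using i by (auto simp: transpose_def split: if_splits)
  have "inv_num n (x \<circ> ?t) = card Sy" by (simp add: inv_num_def Sy_def)
  also have "\<dots> = card (f ` Sy)" using inj by (simp add: card_image)
  also have "\<dots> \<le> card (Sx - {(i, j)})" using img finx by (intro card_mono) auto
  also have "\<dots> < card Sx" by (rule card_Diff1_less[OF finx ij])
  also have "\<dots> = inv_num n x" by (simp add: inv_num_def Sx_def)
  finally show ?thesis .
qed

lemma perms_comp: "v \<in> perms n \<Longrightarrow> refl_trans n i j \<Longrightarrow> v \<circ> transpose i j \<in> perms n"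
  unfolding perms_def refl_trans_def
  by (auto intro!: permutes_compose permutes_swap_id)

lemma le_inv: "bruhat_le n x y \<Longrightarrow> inv_num n x \<le> inv_num n y"
proof -
  assume "bruhat_le n x y"
  then have "(bruhat_step n)\<^sup>*\<^sup>* x y" by (simp add: bruhat_le_def)
  then show ?thesis
    by (induction rule: rtranclp_induct) (auto simp: bruhat_step_def)
qed

lemma le_trans': "bruhat_le n x y \<Longrightarrow> bruhat_le n y z \<Longrightarrow> bruhat_le n x z"
  unfolding bruhat_le_def by auto

lemma le_refl': "v \<in> perms n \<Longrightarrow> bruhat_le n v v"
  unfolding bruhat_le_def by auto

lemma step_le:
  assumes v: "v \<in> perms n" and "1 \<le> i" "i < j" "j \<le> n" "v i > v j"
  shows "bruhat_le n (v \<circ> transpose i j) v"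
proof -
  have rt: "refl_trans n i j" using assms by (simp add: refl_trans_def)
  have vt: "v \<circ> transpose i j \<in> perms n" using perms_comp[OF v rt] .
  have "bruhat_step n (v \<circ> transpose i j) v"
    unfolding bruhat_step_def
  proof (intro conjI)
    show "\<exists>i' j'. refl_trans n i' j' \<and> v = v \<circ> transpose i j \<circ> transpose i' j'"
      using rt by (intro exI[of _ i] exI[of _ j]) (simp add: comp_assoc)
    show "inv_num n (v \<circ> transpose i j) < inv_num n v"
      using inv_swap assms by blast
  qed (rule vt)
  then show ?thesis using vt v unfolding bruhat_le_def by auto
qed

lemma nbr_inv:
  assumes v: "v \<in> perms n" and le: "bruhat_le n (v \<circ> transpose i j) v"
    and ij: "1 \<le> i" "i < j" "j \<le> n"
  shows "v i > v j"
proof (rule ccontr)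
  assume "\<not> v i > v j"
  moreover have "v i \<noteq> v j"
    using v ij permutes_inj[of v "{1..n}"] unfolding perms_def inj_def by auto
  ultimately have lt: "v i < v j" by simp
  let ?y = "v \<circ> transpose i j"
  have "inv_num n (?y \<circ> transpose i j) < inv_num n ?y"
    using lt ij by (intro inv_swap) auto
  moreover have "?y \<circ> transpose i j = v" by (simp add: comp_assoc)
  ultimately show False using le_inv[OF le] by simp
qed

lemma dich:
  assumes pq: "p \<noteq> q" and rs: "r \<noteq> s" and u: "u = transpose p q \<circ> transpose r s" and ne: "u \<noteq> id"
  shows "(u \<circ> u = id \<and> u p = q \<and> u r = s \<and> {x. u x \<noteq> x} = {p, q, r, s} \<and> p \<notin> {r, s} \<and> q \<notin> {r, s})
       \<or> (u \<circ> u \<noteq> id \<and> {x. u x \<noteq> x} = {p, q, r, s} \<and> card {p, q, r, s} = 3)"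
proof -
  consider "p \<notin> {r, s} \<and> q \<notin> {r, s}" | "p = r \<and> q = s" | "p = s \<and> q = r"
    | "p = r \<and> q \<noteq> s" | "p = s \<and> q \<noteq> r" | "q = r \<and> p \<noteq> s" | "q = s \<and> p \<noteq> r"
    by blast
  then show ?thesis
  proof cases
    case 1
    then show ?thesis using pq rs unfolding u by (auto simp: fun_eq_iff transpose_def)
  next
    case 2
    then show ?thesis using ne u by simp
  next
    case 3
    then show ?thesis using ne u by (simp add: transpose_commute)
  next
    case 4
    then have "(u \<circ> u) p \<noteq> p" using pq rs u by (auto simp: transpose_def)
    then have "u \<circ> u \<noteq> id" by (metis id_apply)
    then show ?thesis using 4 pq rs unfolding u by (auto simp: fun_eq_iff transpose_def card_insert_if)
  next
    case 5
    then have "(u \<circ> u) p \<noteq> p" using pq rs u by (auto simp: transpose_def)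
    then have "u \<circ> u \<noteq> id" by (metis id_apply)
    then show ?thesis using 5 pq rs unfolding u by (auto simp: fun_eq_iff transpose_def card_insert_if)
  next
    case 6
    then have "(u \<circ> u) q \<noteq> q" using pq rs u by (auto simp: transpose_def)
    then have "u \<circ> u \<noteq> id" by (metis id_apply)
    then show ?thesis using 6 pq rs unfolding u by (auto simp: fun_eq_iff transpose_def card_insert_if)
  next
    case 7
    then have "(u \<circ> u) q \<noteq> q" using pq rs u by (auto simp: transpose_def)
    then have "u \<circ> u \<noteq> id" by (metis id_apply)
    then show ?thesis using 7 pq rs unfolding u by (auto simp: fun_eq_iff transpose_def card_insert_if)
  qed
qed

lemma card3_sorted:
  fixes S :: "nat set"
  assumes "card S = 3"
  shows "\<exists>a b c. a < b \<and> b < c \<and> S = {a, b, c}"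
proof -
  obtain x y z where S: "S = {x, y, z}" "x \<noteq> y" "y \<noteq> z" "x \<noteq> z"
    using card_3_iff[THEN iffD1, OF assms] by blast
  consider "x < y \<and> y < z" | "x < z \<and> z < y" | "y < x \<and> x < z" | "y < z \<and> z < x"
    | "z < x \<and> x < y" | "z < y \<and> y < x"
    using S by linarith
  then show ?thesis
  proof cases
    case 1 then show ?thesis using S by blast
  next
    case 2 then show ?thesis using S by (intro exI[of _ x] exI[of _ z] exI[of _ y]) auto
  next
    case 3 then show ?thesis using S by (intro exI[of _ y] exI[of _ x] exI[of _ z]) auto
  next
    case 4 then show ?thesis using S by (intro exI[of _ y] exI[of _ z] exI[of _ x]) auto
  next
    case 5 then show ?thesis using S by (intro exI[of _ z] exI[of _ x] exI[of _ y]) auto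
  next
    case 6 then show ?thesis using S by (intro exI[of _ z] exI[of _ y] exI[of _ x]) auto
  qed
qed

lemma trans_in:
  "p \<in> {a, b, c} \<Longrightarrow> q \<in> {a, b, c} \<Longrightarrow> p \<noteq> q \<Longrightarrow>
   transpose p q \<in> {transpose a b, transpose a c, transpose b c}"
  by (auto simp: transpose_commute)

lemma card3_le: "card {x, y, z} \<le> 3"
  by (simp add: card_insert_if)

lemma key:
  fixes u :: "nat \<Rightarrow> nat"
  assumes ne: "u \<noteq> id"
    and d1: "p1 \<noteq> q1" "r1 \<noteq> s1" and u1: "u = transpose p1 q1 \<circ> transpose r1 s1"
    and d2: "p2 \<noteq> q2" "r2 \<noteq> s2" and u2: "u = transpose p2 q2 \<circ> transpose r2 s2"
    and d3: "p3 \<noteq> q3" "r3 \<noteq> s3" and u3: "u = transpose p3 q3 \<circ> transpose r3 s3"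
    and n12: "transpose p1 q1 \<noteq> transpose p2 q2"
    and n13: "transpose p1 q1 \<noteq> transpose p3 q3"
    and n23: "transpose p2 q2 \<noteq> transpose p3 q3"
  shows "\<exists>a b c. a < b \<and> b < c \<and> {a, b, c} \<subseteq> {p1, q1, r1, s1} \<and>
     {transpose p1 q1, transpose p2 q2, transpose p3 q3} = {transpose a b, transpose a c, transpose b c}"
proof (cases "u \<circ> u = id")
  case True
  have D1: "u p1 = q1 \<and> u r1 = s1 \<and> {x. u x \<noteq> x} = {p1, q1, r1, s1} \<and> p1 \<notin> {r1, s1} \<and> q1 \<notin> {r1, s1}"
    using dich[OF d1 u1 ne] True by auto
  have D2: "u p2 = q2" using dich[OF d2 u2 ne] True by auto
  have D3: "u p3 = q3" using dich[OF d3 u3 ne] True by auto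
  have uu: "u (u x) = x" for x using True by (metis comp_apply id_apply)
  have us1: "u s1 = r1" using D1 uu by metis
  have uq1: "u q1 = p1" using D1 uu by metis
  have c2: "transpose p2 q2 = transpose r1 s1"
  proof -
    have "p2 \<in> {x. u x \<noteq> x}" using D2 d2 by auto
    then have "p2 \<in> {p1, q1, r1, s1}" using D1 by simp
    then consider "p2 = p1" | "p2 = q1" | "p2 = r1" | "p2 = s1" by blast
    then show ?thesis
    proof cases
      case 1 then have "q2 = q1" using D1 D2 by simp
      then show ?thesis using n12 1 by simp
    next
      case 2 then have "q2 = p1" using uq1 D2 by simp
      then show ?thesis using n12 2 by (simp add: transpose_commute)
    next
      case 3 then have "q2 = s1" using D1 D2 by simp
      then show ?thesis using 3 by simp
    next
      case 4 then have "q2 = r1" using us1 D2 by simp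
      then show ?thesis using 4 by (simp add: transpose_commute)
    qed
  qed
  have c3: "transpose p3 q3 = transpose r1 s1"
  proof -
    have "p3 \<in> {x. u x \<noteq> x}" using D3 d3 by auto
    then have "p3 \<in> {p1, q1, r1, s1}" using D1 by simp
    then consider "p3 = p1" | "p3 = q1" | "p3 = r1" | "p3 = s1" by blast
    then show ?thesis
    proof cases
      case 1 then have "q3 = q1" using D1 D3 by simp
      then show ?thesis using n13 1 by simp
    next
      case 2 then have "q3 = p1" using uq1 D3 by simp
      then show ?thesis using n13 2 by (simp add: transpose_commute)
    next
      case 3 then have "q3 = s1" using D1 D3 by simp
      then show ?thesis using 3 by simp
    next
      case 4 then have "q3 = r1" using us1 D3 by simp
      then show ?thesis using 4 by (simp add: transpose_commute)
    qed
  qed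
  show ?thesis using c2 c3 n23 by simp
next
  case False
  let ?M = "{x. u x \<noteq> x}"
  have M1: "?M = {p1, q1, r1, s1}" "card ?M = 3" using dich[OF d1 u1 ne] False by auto
  have M2: "?M = {p2, q2, r2, s2}" using dich[OF d2 u2 ne] False by auto
  have M3: "?M = {p3, q3, r3, s3}" using dich[OF d3 u3 ne] False by auto
  obtain a b c where abc: "a < b" "b < c" "?M = {a, b, c}" using card3_sorted[OF M1(2)] by blast
  let ?A = "{transpose p1 q1, transpose p2 q2, transpose p3 q3}"
  let ?B = "{transpose a b, transpose a c, transpose b c}"
  have e: "{p1, q1, r1, s1} = {a, b, c}" "{p2, q2, r2, s2} = {a, b, c}" "{p3, q3, r3, s3} = {a, b, c}"
    using M1 M2 M3 abc by auto
  have "p1 \<in> {a, b, c}" "q1 \<in> {a, b, c}" "p2 \<in> {a, b, c}" "q2 \<in> {a, b, c}"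
    "p3 \<in> {a, b, c}" "q3 \<in> {a, b, c}" using e by blast+
  then have sub: "?A \<subseteq> ?B"
    using trans_in[of p1 a b c q1] trans_in[of p2 a b c q2] trans_in[of p3 a b c q3]
      d1 d2 d3 by blast
  have cA: "card ?A = 3" using n12 n13 n23 by simp
  have cB: "card ?B \<le> 3" by (rule card3_le)
  have "card ?A \<le> card ?B" using sub by (intro card_mono) auto
  then have "card ?A = card ?B" using cA cB by simp
  then have "?A = ?B" using sub by (intro card_subset_eq) auto
  then show ?thesis using abc M1 by (intro exI[of _ a] exI[of _ b] exI[of _ c]) auto
qed

lemma inj_cancel: "inj w \<Longrightarrow> w \<circ> f = w \<circ> g \<Longrightarrow> f = g"
  by (auto simp: fun_eq_iff inj_def)

lemma part1:
  fixes n :: nat and w :: "nat \<Rightarrow> nat" and \<phi> :: "(nat \<Rightarrow> nat) \<Rightarrow> (nat \<Rightarrow> nat)"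
  assumes w: "w \<in> perms n"
    and aut: "gamma_aut n w \<phi>"
    and we: "\<phi> w = id"
    and ijk: "1 \<le> i" "i < j" "j < k" "k \<le> n" "w i > w j" "w j > w k"
  shows "\<exists>a b c. 1 \<le> a \<and> a < b \<and> b < c \<and> c \<le> n \<and> bruhat_le n (transpose a c) w \<and>
               \<phi> ` {w \<circ> transpose i j, w \<circ> transpose i k, w \<circ> transpose j k}
                 = {transpose a b, transpose a c, transpose b c}"
proof -
  let ?I = "bruhat_interval n w"
  have bij: "bij_betw \<phi> ?I ?I" using aut unfolding gamma_aut_def by (rule conjunct1)
  have A: "\<forall>x\<in>?I. \<forall>y\<in>?I. gamma_adj n x y \<longleftrightarrow> gamma_adj n (\<phi> x) (\<phi> y)"
    using aut unfolding gamma_aut_def by (rule conjunct2)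
  have adj: "gamma_adj n x y \<longleftrightarrow> gamma_adj n (\<phi> x) (\<phi> y)" if "x \<in> ?I" "y \<in> ?I" for x y
    using bspec[OF bspec[OF A that(1)] that(2)] .
  have injphi: "inj_on \<phi> ?I" using bij_betw_imp_inj_on[OF bij] .
  have imgphi: "\<phi> ` ?I = ?I" using bij_betw_imp_surj_on[OF bij] .
  have memI: "x \<in> ?I \<longleftrightarrow> bruhat_le n x w" for x by (simp add: bruhat_interval_def)
  have wI: "w \<in> ?I" using le_refl'[OF w] memI by blast
  define X1 where "X1 = w \<circ> transpose i j"
  define X2 where "X2 = w \<circ> transpose i k"
  define X3 where "X3 = w \<circ> transpose j k"
  define C where "C = w \<circ> transpose i j \<circ> transpose j k"
  have rij: "refl_trans n i j" and rik: "refl_trans n i k" and rjk: "refl_trans n j k"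
    using ijk by (auto simp: refl_trans_def)
  have X1I: "X1 \<in> ?I" unfolding X1_def memI using ijk by (intro step_le[OF w]) auto
  have X2I: "X2 \<in> ?I" unfolding X2_def memI using ijk by (intro step_le[OF w]) auto
  have X3I: "X3 \<in> ?I" unfolding X3_def memI using ijk by (intro step_le[OF w]) auto
  have X1p: "X1 \<in> perms n" unfolding X1_def by (rule perms_comp[OF w rij])
  have "bruhat_le n C X1" unfolding C_def X1_def
    using ijk by (intro step_le[OF perms_comp[OF w rij]]) (auto simp: transpose_def)
  then have CI: "C \<in> ?I" using X1I memI le_trans' by blast
  have e2: "transpose i j \<circ> transpose j k = transpose i k \<circ> transpose i j"
    using ijk by (auto simp: fun_eq_iff transpose_def)
  have e3: "transpose i j \<circ> transpose j k = transpose j k \<circ> transpose i k"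
    using ijk by (auto simp: fun_eq_iff transpose_def)
  have aw1: "gamma_adj n w X1" unfolding gamma_adj_def X1_def using rij by blast
  have aw2: "gamma_adj n w X2" unfolding gamma_adj_def X2_def using rik by blast
  have aw3: "gamma_adj n w X3" unfolding gamma_adj_def X3_def using rjk by blast
  have ac1: "gamma_adj n X1 C" unfolding gamma_adj_def X1_def C_def using rjk by blast
  have ac2: "gamma_adj n X2 C" unfolding gamma_adj_def X2_def C_def using rij e2
    by (intro exI[of _ i] exI[of _ j]) (simp add: comp_assoc)
  have ac3: "gamma_adj n X3 C" unfolding gamma_adj_def X3_def C_def using rik e3
    by (intro exI[of _ i] exI[of _ k]) (simp add: comp_assoc)
  have winj: "inj w" using w permutes_inj unfolding perms_def by blast
  have Cw: "C \<noteq> w"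
  proof
    assume "C = w"
    then have "C i = w i" by simp
    moreover have "C i = w j" using ijk unfolding C_def by (simp add: transpose_def)
    ultimately show False using ijk by simp
  qed
  have X12: "X1 \<noteq> X2"
  proof
    assume "X1 = X2" then have "X1 i = X2 i" by simp
    then show False using ijk unfolding X1_def X2_def by (simp add: transpose_def)
  qed
  have X13: "X1 \<noteq> X3"
  proof
    assume "X1 = X3" then have "X1 i = X3 i" by simp
    then show False using ijk unfolding X1_def X3_def by (simp add: transpose_def)
  qed
  have X23: "X2 \<noteq> X3"
  proof
    assume "X2 = X3" then have "X2 i = X3 i" by simp
    then show False using ijk unfolding X2_def X3_def by (simp add: transpose_def)
  qed
  have nb: "\<exists>p q. refl_trans n p q \<and> \<phi> X = transpose p q" if "X \<in> ?I" "gamma_adj n w X" for X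
  proof -
    have "gamma_adj n (\<phi> w) (\<phi> X)" using adj[OF wI that(1)] that(2) by blast
    then show ?thesis using we by (auto simp: gamma_adj_def)
  qed
  have nc: "\<exists>r s. refl_trans n r s \<and> \<phi> C = \<phi> X \<circ> transpose r s" if "X \<in> ?I" "gamma_adj n X C" for X
  proof -
    have "gamma_adj n (\<phi> X) (\<phi> C)" using adj[OF that(1) CI] that(2) by blast
    then show ?thesis by (auto simp: gamma_adj_def)
  qed
  obtain p1 q1 where pq1: "refl_trans n p1 q1" "\<phi> X1 = transpose p1 q1" using nb[OF X1I aw1] by blast
  obtain p2 q2 where pq2: "refl_trans n p2 q2" "\<phi> X2 = transpose p2 q2" using nb[OF X2I aw2] by blast
  obtain p3 q3 where pq3: "refl_trans n p3 q3" "\<phi> X3 = transpose p3 q3" using nb[OF X3I aw3] by blast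
  obtain r1 s1 where rs1: "refl_trans n r1 s1" "\<phi> C = \<phi> X1 \<circ> transpose r1 s1" using nc[OF X1I ac1] by blast
  obtain r2 s2 where rs2: "refl_trans n r2 s2" "\<phi> C = \<phi> X2 \<circ> transpose r2 s2" using nc[OF X2I ac2] by blast
  obtain r3 s3 where rs3: "refl_trans n r3 s3" "\<phi> C = \<phi> X3 \<circ> transpose r3 s3" using nc[OF X3I ac3] by blast
  have Cne: "\<phi> C \<noteq> id"
  proof
    assume "\<phi> C = id"
    then have "\<phi> C = \<phi> w" using we by simp
    then have "C = w" using inj_onD[OF injphi _ CI wI] by blast
    then show False using Cw by blast
  qed
  have n12: "transpose p1 q1 \<noteq> transpose p2 q2"
  proof
    assume "transpose p1 q1 = transpose p2 q2"
    then have "\<phi> X1 = \<phi> X2" using pq1 pq2 by simp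
    then show False using inj_onD[OF injphi _ X1I X2I] X12 by blast
  qed
  have n13: "transpose p1 q1 \<noteq> transpose p3 q3"
  proof
    assume "transpose p1 q1 = transpose p3 q3"
    then have "\<phi> X1 = \<phi> X3" using pq1 pq3 by simp
    then show False using inj_onD[OF injphi _ X1I X3I] X13 by blast
  qed
  have n23: "transpose p2 q2 \<noteq> transpose p3 q3"
  proof
    assume "transpose p2 q2 = transpose p3 q3"
    then have "\<phi> X2 = \<phi> X3" using pq2 pq3 by simp
    then show False using inj_onD[OF injphi _ X2I X3I] X23 by blast
  qed
  have d: "p1 \<noteq> q1" "r1 \<noteq> s1" "p2 \<noteq> q2" "r2 \<noteq> s2" "p3 \<noteq> q3" "r3 \<noteq> s3"
    using pq1 pq2 pq3 rs1 rs2 rs3 by (auto simp: refl_trans_def)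
  have u1: "\<phi> C = transpose p1 q1 \<circ> transpose r1 s1" using rs1 pq1 by simp
  have u2: "\<phi> C = transpose p2 q2 \<circ> transpose r2 s2" using rs2 pq2 by simp
  have u3: "\<phi> C = transpose p3 q3 \<circ> transpose r3 s3" using rs3 pq3 by simp
  obtain a b c where abc: "a < b" "b < c" "{a, b, c} \<subseteq> {p1, q1, r1, s1}"
    and eq: "{transpose p1 q1, transpose p2 q2, transpose p3 q3} = {transpose a b, transpose a c, transpose b c}"
    using key[OF Cne d(1,2) u1 d(3,4) u2 d(5,6) u3 n12 n13 n23] by blast
  have bnd: "1 \<le> a" "c \<le> n" using abc pq1 rs1 by (auto simp: refl_trans_def)
  have img: "\<phi> ` {X1, X2, X3} = {transpose a b, transpose a c, transpose b c}"
    using eq pq1 pq2 pq3 by simp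
  have "transpose a c \<in> \<phi> ` {X1, X2, X3}" using img by simp
  then obtain X where "X \<in> {X1, X2, X3}" "transpose a c = \<phi> X" by blast
  then have "transpose a c \<in> \<phi> ` ?I" using X1I X2I X3I by blast
  then have "bruhat_le n (transpose a c) w" using memI imgphi by simp
  then show ?thesis using abc bnd img unfolding X1_def X2_def X3_def
    by (intro exI[of _ a] exI[of _ b] exI[of _ c]) simp
qed

lemma part2:
  fixes n :: nat and w :: "nat \<Rightarrow> nat" and \<phi> :: "(nat \<Rightarrow> nat) \<Rightarrow> (nat \<Rightarrow> nat)"
  assumes w: "w \<in> perms n"
    and aut: "gamma_aut n w \<phi>"
    and we: "\<phi> w = id"
    and abc: "1 \<le> a" "a < b" "b < c" "c \<le> n" and acw: "bruhat_le n (transpose a c) w"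
  shows "\<exists>i j k. 1 \<le> i \<and> i < j \<and> j < k \<and> k \<le> n \<and> w i > w j \<and> w j > w k \<and>
               {x \<in> bruhat_interval n w. \<phi> x \<in> {transpose a b, transpose a c, transpose b c}}
                 = {w \<circ> transpose i j, w \<circ> transpose i k, w \<circ> transpose j k}"
proof -
  let ?I = "bruhat_interval n w"
  have bij: "bij_betw \<phi> ?I ?I" using aut unfolding gamma_aut_def by (rule conjunct1)
  have A: "\<forall>x\<in>?I. \<forall>y\<in>?I. gamma_adj n x y \<longleftrightarrow> gamma_adj n (\<phi> x) (\<phi> y)"
    using aut unfolding gamma_aut_def by (rule conjunct2)
  have adj: "gamma_adj n x y \<longleftrightarrow> gamma_adj n (\<phi> x) (\<phi> y)" if "x \<in> ?I" "y \<in> ?I" for x y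
    using bspec[OF bspec[OF A that(1)] that(2)] .
  have injphi: "inj_on \<phi> ?I" using bij_betw_imp_inj_on[OF bij] .
  have imgphi: "\<phi> ` ?I = ?I" using bij_betw_imp_surj_on[OF bij] .
  have memI: "x \<in> ?I \<longleftrightarrow> bruhat_le n x w" for x by (simp add: bruhat_interval_def)
  have wI: "w \<in> ?I" using le_refl'[OF w] memI by blast
  have winj: "inj w" using w permutes_inj unfolding perms_def by blast
  define v where "v = transpose a c"
  have vp: "v \<in> perms n" using acw unfolding v_def bruhat_le_def by blast
  have va: "v a = c" "v b = b" "v c = a" using abc unfolding v_def by (auto simp: transpose_def)
  have rab: "refl_trans n a b" and rac: "refl_trans n a c" and rbc: "refl_trans n b c"
    using abc by (auto simp: refl_trans_def)
  define T1 where "T1 = transpose a b"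
  define T3 where "T3 = transpose b c"
  define D where "D = v \<circ> transpose a b"
  have e1: "v \<circ> transpose a b \<circ> transpose b c = T1"
    unfolding v_def T1_def using abc by (auto simp: fun_eq_iff transpose_def)
  have e3: "v \<circ> transpose b c \<circ> transpose a b = T3"
    unfolding v_def T3_def using abc by (auto simp: fun_eq_iff transpose_def)
  have Dv: "bruhat_le n D v" unfolding D_def using abc va by (intro step_le[OF vp]) auto
  have vbc: "bruhat_le n (v \<circ> transpose b c) v" using abc va by (intro step_le[OF vp]) auto
  have "bruhat_le n (v \<circ> transpose a b \<circ> transpose b c) (v \<circ> transpose a b)"
    using abc va by (intro step_le[OF perms_comp[OF vp rab]]) (auto simp: transpose_def)
  then have T1D: "bruhat_le n T1 D" using e1 D_def by simp
  have "bruhat_le n (v \<circ> transpose b c \<circ> transpose a b) (v \<circ> transpose b c)"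
    using abc va by (intro step_le[OF perms_comp[OF vp rbc]]) (auto simp: transpose_def)
  then have T3v: "bruhat_le n T3 (v \<circ> transpose b c)" using e3 by simp
  have vw: "bruhat_le n v w" using acw v_def by simp
  have DI: "D \<in> ?I" using Dv vw le_trans' memI by blast
  have T1I: "T1 \<in> ?I" using T1D Dv vw le_trans' memI by blast
  have T2I: "v \<in> ?I" using vw memI by blast
  have T3I: "T3 \<in> ?I" using T3v vbc vw le_trans' memI by blast
  have ad1: "gamma_adj n T1 D" unfolding gamma_adj_def
    using rbc unfolding T1_def D_def v_def using abc
    by (intro exI[of _ b] exI[of _ c]) (auto simp: fun_eq_iff transpose_def)
  have ad2: "gamma_adj n v D" unfolding gamma_adj_def D_def using rab by blast
  have ad3: "gamma_adj n T3 D" unfolding gamma_adj_def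
    using rac unfolding T3_def D_def v_def using abc
    by (intro exI[of _ a] exI[of _ c]) (auto simp: fun_eq_iff transpose_def)
  have ai1: "gamma_adj n id T1" unfolding gamma_adj_def T1_def using rab by auto
  have ai2: "gamma_adj n id v" unfolding gamma_adj_def v_def using rac by auto
  have ai3: "gamma_adj n id T3" unfolding gamma_adj_def T3_def using rbc by auto
  have Dne: "D \<noteq> id"
  proof
    assume "D = id" then have "D a = a" by simp
    then show False using va abc unfolding D_def by simp
  qed
  have T12: "T1 \<noteq> v"
  proof
    assume "T1 = v" then have "T1 a = v a" by simp
    then show False using va abc unfolding T1_def by simp
  qed
  have T13: "T1 \<noteq> T3"
  proof
    assume "T1 = T3" then have "T1 a = T3 a" by simp
    then show False using abc unfolding T1_def T3_def by (simp add: transpose_def)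
  qed
  have T23: "v \<noteq> T3"
  proof
    assume "v = T3" then have "v a = T3 a" by simp
    then show False using va abc unfolding T3_def by (simp add: transpose_def)
  qed
  have pre: "\<exists>Y\<in>?I. \<phi> Y = T" if "T \<in> ?I" for T
    using that imgphi by (metis imageE)
  obtain Y1 where Y1: "Y1 \<in> ?I" "\<phi> Y1 = T1" using pre[OF T1I] by blast
  obtain Y2 where Y2: "Y2 \<in> ?I" "\<phi> Y2 = v" using pre[OF T2I] by blast
  obtain Y3 where Y3: "Y3 \<in> ?I" "\<phi> Y3 = T3" using pre[OF T3I] by blast
  obtain Z where Z: "Z \<in> ?I" "\<phi> Z = D" using pre[OF DI] by blast
  have nb: "\<exists>p q. refl_trans n p q \<and> Y = w \<circ> transpose p q" if "Y \<in> ?I" "gamma_adj n id (\<phi> Y)" for Y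
  proof -
    have "gamma_adj n w Y" using adj[OF wI that(1)] that(2) we by simp
    then show ?thesis by (auto simp: gamma_adj_def)
  qed
  have nc: "\<exists>r s. refl_trans n r s \<and> Z = Y \<circ> transpose r s" if "Y \<in> ?I" "gamma_adj n (\<phi> Y) D" for Y
  proof -
    have "gamma_adj n Y Z" using adj[OF that(1) Z(1)] that(2) Z(2) by simp
    then show ?thesis by (auto simp: gamma_adj_def)
  qed
  obtain p1 q1 where pq1: "refl_trans n p1 q1" "Y1 = w \<circ> transpose p1 q1" using nb[OF Y1(1)] Y1 ai1 by auto
  obtain p2 q2 where pq2: "refl_trans n p2 q2" "Y2 = w \<circ> transpose p2 q2" using nb[OF Y2(1)] Y2 ai2 by auto
  obtain p3 q3 where pq3: "refl_trans n p3 q3" "Y3 = w \<circ> transpose p3 q3" using nb[OF Y3(1)] Y3 ai3 by auto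
  obtain r1 s1 where rs1: "refl_trans n r1 s1" "Z = Y1 \<circ> transpose r1 s1" using nc[OF Y1(1)] Y1 ad1 by auto
  obtain r2 s2 where rs2: "refl_trans n r2 s2" "Z = Y2 \<circ> transpose r2 s2" using nc[OF Y2(1)] Y2 ad2 by auto
  obtain r3 s3 where rs3: "refl_trans n r3 s3" "Z = Y3 \<circ> transpose r3 s3" using nc[OF Y3(1)] Y3 ad3 by auto
  define u where "u = transpose p1 q1 \<circ> transpose r1 s1"
  have Zu: "Z = w \<circ> u" using rs1 pq1 u_def by (simp add: comp_assoc)
  have u1: "u = transpose p1 q1 \<circ> transpose r1 s1" by (simp add: u_def)
  have u2: "u = transpose p2 q2 \<circ> transpose r2 s2"
    using inj_cancel[OF winj, of u "transpose p2 q2 \<circ> transpose r2 s2"] Zu rs2 pq2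
    by (simp add: comp_assoc)
  have u3: "u = transpose p3 q3 \<circ> transpose r3 s3"
    using inj_cancel[OF winj, of u "transpose p3 q3 \<circ> transpose r3 s3"] Zu rs3 pq3
    by (simp add: comp_assoc)
  have une: "u \<noteq> id"
  proof
    assume "u = id" then have "Z = w" using Zu by simp
    then have "D = id" using Z we by simp
    then show False using Dne by blast
  qed
  have n12: "transpose p1 q1 \<noteq> transpose p2 q2"
  proof
    assume "transpose p1 q1 = transpose p2 q2"
    then have "Y1 = Y2" using pq1 pq2 by simp
    then show False using Y1 Y2 T12 by simp
  qed
  have n13: "transpose p1 q1 \<noteq> transpose p3 q3"
  proof
    assume "transpose p1 q1 = transpose p3 q3"
    then have "Y1 = Y3" using pq1 pq3 by simp
    then show False using Y1 Y3 T13 by simp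
  qed
  have n23: "transpose p2 q2 \<noteq> transpose p3 q3"
  proof
    assume "transpose p2 q2 = transpose p3 q3"
    then have "Y2 = Y3" using pq2 pq3 by simp
    then show False using Y2 Y3 T23 by simp
  qed
  have d: "p1 \<noteq> q1" "r1 \<noteq> s1" "p2 \<noteq> q2" "r2 \<noteq> s2" "p3 \<noteq> q3" "r3 \<noteq> s3"
    using pq1 pq2 pq3 rs1 rs2 rs3 by (auto simp: refl_trans_def)
  obtain i j k where ijk: "i < j" "j < k" "{i, j, k} \<subseteq> {p1, q1, r1, s1}"
    and eq: "{transpose p1 q1, transpose p2 q2, transpose p3 q3} = {transpose i j, transpose i k, transpose j k}"
    using key[OF une d(1,2) u1 d(3,4) u2 d(5,6) u3 n12 n13 n23] by blast
  have bnd: "1 \<le> i" "k \<le> n" using ijk pq1 rs1 by (auto simp: refl_trans_def)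
  have Ys: "{Y1, Y2, Y3} = {w \<circ> transpose i j, w \<circ> transpose i k, w \<circ> transpose j k}"
  proof -
    have "{Y1, Y2, Y3} = (\<lambda>s. w \<circ> s) ` {transpose p1 q1, transpose p2 q2, transpose p3 q3}"
      using pq1 pq2 pq3 by simp
    also have "\<dots> = (\<lambda>s. w \<circ> s) ` {transpose i j, transpose i k, transpose j k}" using eq by simp
    also have "\<dots> = {w \<circ> transpose i j, w \<circ> transpose i k, w \<circ> transpose j k}" by simp
    finally show ?thesis .
  qed
  have YI: "{Y1, Y2, Y3} \<subseteq> ?I" using Y1 Y2 Y3 by blast
  have wij: "w i > w j"
    using nbr_inv[OF w, of i j] Ys YI memI ijk bnd by auto
  have wjk: "w j > w k"
    using nbr_inv[OF w, of j k] Ys YI memI ijk bnd by auto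
  have S: "{x \<in> ?I. \<phi> x \<in> {T1, v, T3}} = {Y1, Y2, Y3}"
  proof
    show "{Y1, Y2, Y3} \<subseteq> {x \<in> ?I. \<phi> x \<in> {T1, v, T3}}" using Y1 Y2 Y3 by auto
    show "{x \<in> ?I. \<phi> x \<in> {T1, v, T3}} \<subseteq> {Y1, Y2, Y3}"
    proof
      fix x assume x: "x \<in> {x \<in> ?I. \<phi> x \<in> {T1, v, T3}}"
      then have xI: "x \<in> ?I" by blast
      from x consider "\<phi> x = \<phi> Y1" | "\<phi> x = \<phi> Y2" | "\<phi> x = \<phi> Y3" using Y1 Y2 Y3 by auto
      then show "x \<in> {Y1, Y2, Y3}"
        using inj_onD[OF injphi _ xI Y1(1)] inj_onD[OF injphi _ xI Y2(1)] inj_onD[OF injphi _ xI Y3(1)]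
        by cases auto
    qed
  qed
  show ?thesis
    using S Ys ijk bnd wij wjk unfolding T1_def T3_def v_def
    by (intro exI[of _ i] exI[of _ j] exI[of _ k]) simp
qed

theorem lemma4p2:
  fixes n :: nat and w :: "nat \<Rightarrow> nat" and \<phi> :: "(nat \<Rightarrow> nat) \<Rightarrow> (nat \<Rightarrow> nat)"
  assumes w: "w \<in> perms n"
    and aut: "gamma_aut n w \<phi>"
    and we: "\<phi> w = id"
  shows "(\<forall>i j k. 1 \<le> i \<and> i < j \<and> j < k \<and> k \<le> n \<and> w i > w j \<and> w j > w k \<longrightarrow>
            (\<exists>a b c. 1 \<le> a \<and> a < b \<and> b < c \<and> c \<le> n \<and> bruhat_le n (transpose a c) w \<and>
               \<phi> ` {w \<circ> transpose i j, w \<circ> transpose i k, w \<circ> transpose j k}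
                 = {transpose a b, transpose a c, transpose b c}))
       \<and> (\<forall>a b c. 1 \<le> a \<and> a < b \<and> b < c \<and> c \<le> n \<and> bruhat_le n (transpose a c) w \<longrightarrow>
            (\<exists>i j k. 1 \<le> i \<and> i < j \<and> j < k \<and> k \<le> n \<and> w i > w j \<and> w j > w k \<and>
               {x \<in> bruhat_interval n w. \<phi> x \<in> {transpose a b, transpose a c, transpose b c}}
                 = {w \<circ> transpose i j, w \<circ> transpose i k, w \<circ> transpose j k}))"
proof (intro conjI allI impI)
  fix i j k assume "1 \<le> i \<and> i < j \<and> j < k \<and> k \<le> n \<and> w i > w j \<and> w j > w k"
  then show "\<exists>a b c. 1 \<le> a \<and> a < b \<and> b < c \<and> c \<le> n \<and> bruhat_le n (transpose a c) w \<and>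
               \<phi> ` {w \<circ> transpose i j, w \<circ> transpose i k, w \<circ> transpose j k}
                 = {transpose a b, transpose a c, transpose b c}"
    using part1[OF w aut we] by blast
next
  fix a b c assume "1 \<le> a \<and> a < b \<and> b < c \<and> c \<le> n \<and> bruhat_le n (transpose a c) w"
  then show "\<exists>i j k. 1 \<le> i \<and> i < j \<and> j < k \<and> k \<le> n \<and> w i > w j \<and> w j > w k \<and>
               {x \<in> bruhat_interval n w. \<phi> x \<in> {transpose a b, transpose a c, transpose b c}}
                 = {w \<circ> transpose i j, w \<circ> transpose i k, w \<circ> transpose j k}"
    using part2[OF w aut we] by blast
qed

end
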